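(* In the click-through auction setting with $n\ge 2$ bidders, suppose the environment is symmetric, i.e. the random variables $v_1r_1,\dots,v_nr_n$ (with $r\sim G$, $G$ of finite support) are exchangeable. Then for every $\varepsilon>0$ there exists a calibrated (correlated) information structure whose revenue is at least $\mathbb{E}[\max_i v_ir_i]-\varepsilon$.
   Context: Setting. There are $n\ge 2$ bidders; bidder $i$ has a known value per click $v_i\ge 0$. A vector of click-through rates (CTRs) $r=(r_1,\dots,r_n)\in[0,1]^n$ is drawn from a prior distribution $G$ with finite support (mass function $g$). An information structure is a probability distribution $x$ with finite support on pairs $(r,s)\in[0,1]^n\times[0,1]^n$ with $\sum_s x(r,s)=g(r)$ for all $r$. Given signals $s$, the winner $i^*$ is a bidder maximizing $v_is_i$, ties broken uniformly at random; the price per click is $p_{i^*}=\max_{j\neq i^*}v_js_j/s_{i^*}$ (revenue $0$ if $s_{i^*}=0$), paid only upon a click, which occurs with probability $r_{i^*}$. Revenue is $\mathbb{E}[r_{i^*}p_{i^*}]$. Calibrated: $\mathbb{E}[r_i\mid s_i=t]=t$ for every $i$ and every $t$ with $\Pr[s_i=t]>0$. Independent: $\mathbb{E}[r_i\mid s]=\mathbb{E}[r_i\mid s_i]$ for all $i$ and all $s$ in the support; correlated means not independent. The quantity $\mathbb{E}[\max_iv_ir_i]$ is the (full) social surplus. *)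

theory Defs
  imports "HOL-Probability.Probability"
begin

definition in_unit_cube :: "('b \<Rightarrow> real) \<Rightarrow> bool" where
  "in_unit_cube r \<longleftrightarrow> (\<forall>i. 0 \<le> r i \<and> r i \<le> 1)"

definition info_structure ::
  "('b \<Rightarrow> real) pmf \<Rightarrow> (('b \<Rightarrow> real) \<times> ('b \<Rightarrow> real)) pmf \<Rightarrow> bool" where
  "info_structure G x \<longleftrightarrow> finite (set_pmf x) \<and> map_pmf fst x = G \<and>
     (\<forall>rs \<in> set_pmf x. in_unit_cube (snd rs))"

definition calibrated :: "(('b \<Rightarrow> real) \<times> ('b \<Rightarrow> real)) pmf \<Rightarrow> bool" where
  "calibrated x \<longleftrightarrow> (\<forall>i t. measure_pmf.prob x {rs. snd rs i = t} > 0 \<longrightarrow>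
      measure_pmf.expectation (cond_pmf x {rs. snd rs i = t}) (\<lambda>rs. fst rs i) = t)"

definition winners :: "('b \<Rightarrow> real) \<Rightarrow> ('b \<Rightarrow> real) \<Rightarrow> 'b set" where
  "winners v s = {i. \<forall>j. v j * s j \<le> v i * s i}"

definition price :: "('b::finite \<Rightarrow> real) \<Rightarrow> ('b \<Rightarrow> real) \<Rightarrow> 'b \<Rightarrow> real" where
  "price v s i = (if s i = 0 then 0 else Max ((\<lambda>j. v j * s j) ` (UNIV - {i})) / s i)"

definition revenue_at :: "('b::finite \<Rightarrow> real) \<Rightarrow> ('b \<Rightarrow> real) \<Rightarrow> ('b \<Rightarrow> real) \<Rightarrow> real" where
  "revenue_at v r s = (\<Sum>i\<in>winners v s. (1 / real (card (winners v s))) * (r i * price v s i))"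

definition revenue :: "('b::finite \<Rightarrow> real) \<Rightarrow> (('b \<Rightarrow> real) \<times> ('b \<Rightarrow> real)) pmf \<Rightarrow> real" where
  "revenue v x = measure_pmf.expectation x (\<lambda>rs. revenue_at v (fst rs) (snd rs))"

definition surplus :: "('b::finite \<Rightarrow> real) \<Rightarrow> ('b \<Rightarrow> real) pmf \<Rightarrow> real" where
  "surplus v G = measure_pmf.expectation G (\<lambda>r. Max (range (\<lambda>i. v i * r i)))"

definition exchangeable_env :: "('b \<Rightarrow> real) \<Rightarrow> ('b \<Rightarrow> real) pmf \<Rightarrow> bool" where
  "exchangeable_env v G \<longleftrightarrow> (\<forall>\<pi>. \<pi> permutes (UNIV :: 'b set) \<longrightarrow>
     map_pmf (\<lambda>r i. v (\<pi> i) * r (\<pi> i)) G = map_pmf (\<lambda>r i. v i * r i) G)"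

end

theory Submission imports Defs begin

lemma integral_bind_pmf_fin:
  fixes f :: "'b \<Rightarrow> real"
  assumes fM: "finite (set_pmf M)" and fN: "\<And>x. x \<in> set_pmf M \<Longrightarrow> finite (set_pmf (N x))"
  shows "measure_pmf.expectation (bind_pmf M N) f =
         measure_pmf.expectation M (\<lambda>x. measure_pmf.expectation (N x) f)"
proof -
  define A where "A = (\<Union>x\<in>set_pmf M. set_pmf (N x))"
  have fA: "finite A" unfolding A_def using fM fN by auto
  have "measure_pmf.expectation (bind_pmf M N) f = (\<Sum>a\<in>A. f a * pmf (bind_pmf M N) a)"
    by (rule integral_measure_pmf_real[OF fA]) (auto simp: A_def)
  also have "\<dots> = (\<Sum>a\<in>A. f a * (\<Sum>x\<in>set_pmf M. pmf (N x) a * pmf M x))"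
    by (intro sum.cong refl arg_cong2[where f="(*)"], unfold pmf_bind,
        rule integral_measure_pmf_real[OF fM]) auto
  also have "\<dots> = (\<Sum>x\<in>set_pmf M. (\<Sum>a\<in>A. f a * pmf (N x) a) * pmf M x)"
    by (simp add: sum_distrib_left sum_distrib_right sum.swap[of _ A] mult.assoc)
  also have "\<dots> = (\<Sum>x\<in>set_pmf M. measure_pmf.expectation (N x) f * pmf M x)"
  proof (intro sum.cong refl arg_cong2[where f="(*)"])
    fix x assume x: "x \<in> set_pmf M"
    show "(\<Sum>a\<in>A. f a * pmf (N x) a) = measure_pmf.expectation (N x) f"
      by (rule integral_measure_pmf_real[OF fA, symmetric]) (use x in \<open>auto simp: A_def\<close>)
  qed
  also have "\<dots> = measure_pmf.expectation M (\<lambda>x. measure_pmf.expectation (N x) f)"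
    by (rule integral_measure_pmf_real[OF fM, symmetric]) auto
  finally show ?thesis .
qed

lemma calibrated_crit:
  fixes x :: "(('b \<Rightarrow> real) \<times> ('b \<Rightarrow> real)) pmf"
  assumes fx: "finite (set_pmf x)"
  and id: "\<And>i t. measure_pmf.expectation x (\<lambda>rs. indicator {rs. snd rs i = t} rs * fst rs i)
              = t * measure_pmf.expectation x (indicator {rs. snd rs i = t})"
  shows "calibrated x"
  unfolding calibrated_def
proof (intro allI impI)
  fix i t
  let ?A = "{rs::('b \<Rightarrow> real) \<times> ('b \<Rightarrow> real). snd rs i = t}"
  assume P: "measure_pmf.prob x ?A > 0"
  have ne: "set_pmf x \<inter> ?A \<noteq> {}" using P measure_pmf_zero_iff[of x ?A] by auto
  have PI: "measure_pmf.expectation x (indicator ?A) = measure_pmf.prob x ?A"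
    by simp
  have "measure_pmf.expectation (cond_pmf x ?A) (\<lambda>rs. fst rs i)
      = (\<Sum>a\<in>set_pmf x. fst a i * pmf (cond_pmf x ?A) a)"
    by (rule integral_measure_pmf_real[OF fx]) (use ne in auto)
  also have "\<dots> = (\<Sum>a\<in>set_pmf x. indicator ?A a * fst a i * pmf x a) / measure_pmf.prob x ?A"
    by (simp add: pmf_cond[OF ne] sum_divide_distrib indicator_def, intro sum.cong refl, auto)
  also have "(\<Sum>a\<in>set_pmf x. indicator ?A a * fst a i * pmf x a) =
      measure_pmf.expectation x (\<lambda>rs. indicator ?A rs * fst rs i)"
    by (rule integral_measure_pmf_real[OF fx, symmetric]) auto
  also note id
  finally show "measure_pmf.expectation (cond_pmf x ?A) (\<lambda>rs. fst rs i) = t"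
    using P PI by simp
qed


definition am :: "('b \<Rightarrow> real) \<Rightarrow> 'b set" where
  "am u = {i. \<forall>j. u j \<le> u i}"

definition pw :: "('b \<Rightarrow> real) \<Rightarrow> 'b \<Rightarrow> real" where
  "pw u j = (if j \<in> am u then 1 / real (card (am u)) else 0)"

lemma winners_am: "winners v r = am (\<lambda>i. v i * r i)"
  by (simp add: winners_def am_def)

lemma am_Max:
  fixes u :: "'b::finite \<Rightarrow> real"
  shows "j \<in> am u \<longleftrightarrow> u j = Max (range u)"
proof
  assume "j \<in> am u" then show "u j = Max (range u)"
    by (intro Max_eqI[symmetric]) (auto simp: am_def)
next
  assume "u j = Max (range u)" then show "j \<in> am u"
    by (auto simp: am_def)
qed

lemma am_ne:
  fixes u :: "'b::finite \<Rightarrow> real"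
  shows "am u \<noteq> {}"
proof -
  have "Max (range u) \<in> range u" by (rule Max_in) auto
  then obtain j where "Max (range u) = u j" by (rule rangeE)
  then have "j \<in> am u" using am_Max[of j u] by simp
  then show ?thesis by blast
qed

lemma am_perm:
  fixes u :: "'b \<Rightarrow> real"
  assumes "\<pi> permutes (UNIV :: 'b set)"
  shows "am (\<lambda>i. u (\<pi> i)) = \<pi> -` am u"
proof -
  have s: "surj \<pi>" using assms by (simp add: permutes_surj)
  show ?thesis
  proof (auto simp: am_def)
    fix x j assume "\<forall>j. u (\<pi> j) \<le> u (\<pi> x)"
    moreover obtain l where "j = \<pi> l" using s by (metis surjD)
    ultimately show "u j \<le> u (\<pi> x)" by auto
  qed
qed

lemma card_am_perm:
  fixes u :: "'b::finite \<Rightarrow> real"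
  assumes "\<pi> permutes (UNIV :: 'b set)"
  shows "card (am (\<lambda>i. u (\<pi> i))) = card (am u)"
  unfolding am_perm[OF assms]
  by (rule card_vimage_inj) (use assms in \<open>auto simp: permutes_inj permutes_surj\<close>)

lemma pw_perm:
  fixes u :: "'b::finite \<Rightarrow> real"
  assumes "\<pi> permutes (UNIV :: 'b set)"
  shows "pw (\<lambda>i. u (\<pi> i)) j = pw u (\<pi> j)"
  unfolding pw_def card_am_perm[OF assms] using am_perm[OF assms] by auto

lemma sum_pw:
  fixes u :: "'b::finite \<Rightarrow> real"
  shows "(\<Sum>j\<in>UNIV. pw u j) = 1"
proof -
  have "(\<Sum>j\<in>UNIV. pw u j) = (\<Sum>j\<in>am u. 1 / real (card (am u)))"
    unfolding pw_def by (rule sum.If_cases[where h="\<lambda>_. 0", simplified] | simp add: sum.If_cases)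
  also have "\<dots> = 1" using am_ne[of u] by simp
  finally show ?thesis .
qed

lemma sum_upw:
  fixes u :: "'b::finite \<Rightarrow> real"
  shows "(\<Sum>j\<in>UNIV. u j * pw u j) = Max (range u)"
proof -
  have "(\<Sum>j\<in>UNIV. u j * pw u j) = (\<Sum>j\<in>am u. Max (range u) / real (card (am u)))"
  proof -
    have "\<And>j. u j * pw u j = (if j \<in> am u then Max (range u) / real (card (am u)) else 0)"
      by (auto simp: pw_def am_Max)
    then have "(\<Sum>j\<in>UNIV. u j * pw u j) = (\<Sum>j\<in>UNIV. (if j \<in> am u then Max (range u) / real (card (am u)) else 0))"
      by (intro sum.cong refl) (use \<open>\<And>j. u j * pw u j = _\<close> in auto)
    also have "\<dots> = (\<Sum>j\<in>UNIV \<inter> am u. Max (range u) / real (card (am u)))"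
      by (rule sum.inter_restrict[symmetric]) simp
    finally show ?thesis by simp
  qed
  also have "\<dots> = Max (range u)" using am_ne[of u] by simp
  finally show ?thesis .
qed

lemma pw_nonneg: "pw u j \<ge> 0" by (simp add: pw_def)
lemma pw_le1: "pw (u::'b::finite \<Rightarrow> real) j \<le> 1"
proof -
  have "j \<in> am u \<Longrightarrow> card (am u) > 0"
    by (auto simp: card_gt_0_iff)
  then show ?thesis by (auto simp: pw_def)
qed


lemma sum_nat_real: "(\<Sum>k\<in>{1..K}. real k) = real K * (real K + 1) / 2"
  by (induction K) (simp_all add: field_simps)

lemma telesc:
  fixes f :: "nat \<Rightarrow> real"
  shows "1 \<le> K \<Longrightarrow> (\<Sum>k\<in>{2..K}. f k - f (k - 1)) = f K - f 1"
proof (induction K)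
  case 0 then show ?case by simp
next
  case (Suc K)
  show ?case
  proof (cases "K = 0")
    case True then show ?thesis by simp
  next
    case False
    have "{2..Suc K} = insert (Suc K) {2..K}" using False by auto
    then show ?thesis using Suc False by simp
  qed
qed

locale ctr =
  fixes v :: "'b::finite \<Rightarrow> real" and G :: "('b \<Rightarrow> real) pmf"
  assumes n2: "CARD('b) \<ge> 2" and vnn: "\<And>i. v i \<ge> 0" and fG: "finite (set_pmf G)"
    and cube: "\<And>r. r \<in> set_pmf G \<Longrightarrow> in_unit_cube r"
    and exch: "exchangeable_env v G"
begin

abbreviation EG :: "(('b \<Rightarrow> real) \<Rightarrow> real) \<Rightarrow> real" where
  "EG f \<equiv> measure_pmf.expectation G f"

definition w :: "('b \<Rightarrow> real) \<Rightarrow> 'b \<Rightarrow> real" where "w r = (\<lambda>i. v i * r i)"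

lemma EG_sum: "EG f = (\<Sum>r\<in>set_pmf G. f r * pmf G r)"
  by (rule integral_measure_pmf_real[OF fG]) auto

lemma EG_cong: "(\<And>r. r \<in> set_pmf G \<Longrightarrow> f r = g r) \<Longrightarrow> EG f = EG g"
  unfolding EG_sum by (intro sum.cong) auto

lemma EG_add: "EG (\<lambda>r. f r + g r) = EG f + EG g"
  unfolding EG_sum by (simp add: sum.distrib distrib_right)

lemma EG_diff: "EG (\<lambda>r. f r - g r) = EG f - EG g"
  unfolding EG_sum by (simp add: sum_subtractf left_diff_distrib)

lemma EG_cmult: "EG (\<lambda>r. c * f r) = c * EG f"
  unfolding EG_sum by (simp add: sum_distrib_left mult.assoc)

lemma EG_const: "EG (\<lambda>r. c) = c"
  by simp

lemma EG_sumS: "finite S \<Longrightarrow> EG (\<lambda>r. \<Sum>j\<in>S. f j r) = (\<Sum>j\<in>S. EG (f j))"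
  unfolding EG_sum by (simp add: sum_distrib_right sum.swap[of _ S])

lemma EG_mono: "(\<And>r. r \<in> set_pmf G \<Longrightarrow> f r \<le> g r) \<Longrightarrow> EG f \<le> EG g"
  unfolding EG_sum by (intro sum_mono mult_right_mono) auto

lemma r_bounds: "r \<in> set_pmf G \<Longrightarrow> 0 \<le> r i \<and> r i \<le> 1"
  using cube[of r] by (auto simp: in_unit_cube_def)

lemma exch_EG:
  assumes "\<pi> permutes (UNIV :: 'b set)"
  shows "EG (\<lambda>r. \<Phi> (\<lambda>i. w r (\<pi> i))) = EG (\<lambda>r. \<Phi> (w r))"
proof -
  have m: "map_pmf (\<lambda>r i. v (\<pi> i) * r (\<pi> i)) G = map_pmf (\<lambda>r i. v i * r i) G"
    using exch assms unfolding exchangeable_env_def by auto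
  have "measure_pmf.expectation (map_pmf (\<lambda>r i. v (\<pi> i) * r (\<pi> i)) G) \<Phi>
      = measure_pmf.expectation (map_pmf (\<lambda>r i. v i * r i) G) \<Phi>" by (simp only: m)
  then show ?thesis by (simp add: w_def)
qed

lemma sym_EG:
  assumes "\<And>\<pi> u j. \<pi> permutes (UNIV :: 'b set) \<Longrightarrow> \<Psi> j (\<lambda>i. u (\<pi> i)) = \<Psi> (\<pi> j) u"
  shows "EG (\<lambda>r. \<Psi> j (w r)) = EG (\<lambda>r. \<Psi> j' (w r))"
proof -
  define \<pi> where "\<pi> = Transposition.transpose j j'"
  have p: "\<pi> permutes (UNIV :: 'b set)" unfolding \<pi>_def by (rule permutes_swap_id) auto
  have "EG (\<lambda>r. \<Psi> j' (w r)) = EG (\<lambda>r. \<Psi> (\<pi> j) (w r))" by (simp add: \<pi>_def)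
  also have "\<dots> = EG (\<lambda>r. \<Psi> j (\<lambda>i. w r (\<pi> i)))" using assms[OF p] by simp
  also have "\<dots> = EG (\<lambda>r. \<Psi> j (w r))" by (rule exch_EG[OF p])
  finally show ?thesis by simp
qed

definition nn :: real where "nn = real CARD('b)"
definition A :: real where "A = EG (\<lambda>r. Max (range (w r)))"
definition mu :: real where "mu = (\<Sum>j\<in>UNIV. EG (\<lambda>r. w r j)) / nn"

lemma nn_ge2: "nn \<ge> 2" using n2 unfolding nn_def by simp

lemma all_equal_avg:
  fixes f :: "'b \<Rightarrow> real"
  assumes "\<And>j j'. f j = f j'"
  shows "f j = (\<Sum>j\<in>UNIV. f j) / nn"
proof -
  have "(\<Sum>j'\<in>UNIV. f j') = (\<Sum>j'\<in>(UNIV::'b set). f j)" using assms by (intro sum.cong) auto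
  then show ?thesis using nn_ge2 by (simp add: nn_def)
qed

lemma PW: "EG (\<lambda>r. pw (w r) j) = 1 / nn"
proof -
  have eq: "\<And>j j'. EG (\<lambda>r. pw (w r) j) = EG (\<lambda>r. pw (w r) j')"
    by (rule sym_EG) (simp add: pw_perm)
  have "(\<Sum>j\<in>UNIV. EG (\<lambda>r. pw (w r) j)) = EG (\<lambda>r. \<Sum>j\<in>UNIV. pw (w r) j)"
    by (rule EG_sumS[symmetric]) simp
  also have "\<dots> = 1" by (simp add: sum_pw)
  moreover have "EG (\<lambda>r. pw (w r) j) = (\<Sum>j\<in>UNIV. EG (\<lambda>r. pw (w r) j)) / nn"
    by (rule all_equal_avg) (rule eq)
  ultimately show ?thesis by simp
qed

lemma WPW: "EG (\<lambda>r. w r j * pw (w r) j) = A / nn"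
proof -
  have eq: "\<And>j j'. EG (\<lambda>r. w r j * pw (w r) j) = EG (\<lambda>r. w r j' * pw (w r) j')"
    by (rule sym_EG[where \<Psi>="\<lambda>j u. u j * pw u j"]) (simp add: pw_perm)
  have "(\<Sum>j\<in>UNIV. EG (\<lambda>r. w r j * pw (w r) j)) = EG (\<lambda>r. \<Sum>j\<in>UNIV. w r j * pw (w r) j)"
    by (rule EG_sumS[symmetric]) simp
  also have "\<dots> = A" by (simp add: sum_upw A_def)
  moreover have "EG (\<lambda>r. w r j * pw (w r) j) = (\<Sum>j\<in>UNIV. EG (\<lambda>r. w r j * pw (w r) j)) / nn"
    by (rule all_equal_avg) (rule eq)
  ultimately show ?thesis by simp
qed

lemma MU: "EG (\<lambda>r. w r j) = mu"
proof -
  have eq: "\<And>j j'. EG (\<lambda>r. w r j) = EG (\<lambda>r. w r j')"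
    by (rule sym_EG[where \<Psi>="\<lambda>j u. u j"]) simp
  show ?thesis unfolding mu_def by (rule all_equal_avg) (rule eq)
qed


lemma other_ex: "\<exists>j::'b. j \<noteq> i"
proof -
  have "\<not> UNIV \<subseteq> {i}"
  proof
    assume "UNIV \<subseteq> {i}"
    then have "card (UNIV::'b set) \<le> card {i}" by (intro card_mono) auto
    then show False using n2 by simp
  qed
  then show ?thesis by auto
qed

lemma surplus_A: "surplus v G = A"
  by (simp add: surplus_def A_def w_def)

lemma A_le_v: "A \<le> v j"
proof -
  have "A / nn = EG (\<lambda>r. v j * (r j * pw (w r) j))" using WPW[of j] by (simp add: w_def mult.assoc)
  also have "\<dots> = v j * EG (\<lambda>r. r j * pw (w r) j)" by (rule EG_cmult)
  also have "\<dots> \<le> v j * EG (\<lambda>r. pw (w r) j)"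
  proof (intro mult_left_mono EG_mono vnn)
    fix r assume "r \<in> set_pmf G"
    then show "r j * pw (w r) j \<le> pw (w r) j"
      using r_bounds[of r j] pw_nonneg[of "w r" j] by (simp add: mult_left_le_one_le)
  qed
  also have "\<dots> = v j / nn" using PW by simp
  finally show ?thesis using nn_ge2 by (simp add: divide_right_mono_neg field_simps)
qed

lemma mu_minus: "mu - A / nn = EG (\<lambda>r. w r j * (1 - pw (w r) j))"
  using MU[of j] WPW[of j] by (simp add: right_diff_distrib EG_diff)

lemma mu_ge: "A / nn \<le> mu"
proof -
  have "EG (\<lambda>r. w r j * (1 - pw (w r) j)) \<ge> EG (\<lambda>r. 0)" for j
    by (intro EG_mono mult_nonneg_nonneg) (use r_bounds pw_le1 vnn in \<open>auto simp: w_def\<close>)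
  then have "0 \<le> mu - A / nn" using mu_minus[of undefined] by simp
  then show ?thesis by simp
qed

lemma A_nonneg: "A \<ge> 0"
proof -
  have h: "EG (\<lambda>r. w r j * pw (w r) j) \<ge> EG (\<lambda>r. 0)" for j
    by (intro EG_mono mult_nonneg_nonneg) (use r_bounds pw_nonneg vnn in \<open>auto simp: w_def\<close>)
  have "0 \<le> A / nn" using h[of undefined] WPW[of undefined] by simp
  then show ?thesis using nn_ge2 by (simp add: zero_le_divide_iff)
qed

lemma A_zero_case: "v j = 0 \<Longrightarrow> A \<le> 0"
  using WPW[of j] nn_ge2 by (simp add: w_def)

lemma price_nonneg:
  assumes "\<And>j. s j \<ge> 0"
  shows "price v s i \<ge> 0"
proof -
  obtain j where j: "j \<noteq> i" using other_ex by blast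
  have "v j * s j \<le> Max ((\<lambda>j. v j * s j) ` (UNIV - {i}))"
    by (rule Max_ge) (use j in auto)
  moreover have "v j * s j \<ge> 0" using vnn assms by simp
  ultimately show ?thesis unfolding price_def using assms by (auto intro!: divide_nonneg_nonneg)
qed

lemma revenue_at_nonneg:
  assumes "\<And>j. s j \<ge> 0" "\<And>j. r j \<ge> 0"
  shows "revenue_at v r s \<ge> 0"
  unfolding revenue_at_def
  by (intro sum_nonneg mult_nonneg_nonneg) (use assms price_nonneg in auto)

lemma revenue_nonneg:
  assumes "\<And>rs. rs \<in> set_pmf x \<Longrightarrow> in_unit_cube (fst rs) \<and> in_unit_cube (snd rs)"
    and "finite (set_pmf x)"
  shows "revenue v x \<ge> 0"
proof -
  have "revenue v x = (\<Sum>rs\<in>set_pmf x. revenue_at v (fst rs) (snd rs) * pmf x rs)"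
    unfolding revenue_def by (rule integral_measure_pmf_real[OF assms(2)]) auto
  also have "\<dots> \<ge> 0"
    by (intro sum_nonneg mult_nonneg_nonneg revenue_at_nonneg) (use assms in \<open>auto simp: in_unit_cube_def\<close>)
  finally show ?thesis by simp
qed

definition c0 :: "'b \<Rightarrow> real" where "c0 j = EG (\<lambda>r. r j)"
definition x0 where "x0 = map_pmf (\<lambda>r. (r, c0)) G"

lemma c0_bounds: "0 \<le> c0 j \<and> c0 j \<le> 1"
proof
  show "0 \<le> c0 j" unfolding c0_def using EG_mono[of "\<lambda>r. 0" "\<lambda>r. r j"] r_bounds by simp
  show "c0 j \<le> 1" unfolding c0_def using EG_mono[of "\<lambda>r. r j" "\<lambda>r. 1"] r_bounds by simp
qed

lemma x0_info: "info_structure G x0"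
  unfolding info_structure_def x0_def
  using fG c0_bounds by (auto simp: pmf.map_comp o_def in_unit_cube_def)

lemma x0_calibrated: "calibrated x0"
proof (rule calibrated_crit)
  show "finite (set_pmf x0)" unfolding x0_def using fG by simp
  fix i t
  show "measure_pmf.expectation x0 (\<lambda>rs. indicator {rs. snd rs i = t} rs * fst rs i)
     = t * measure_pmf.expectation x0 (indicator {rs. snd rs i = t})"
    by (cases "c0 i = t") (auto simp: x0_def indicator_def c0_def)
qed

lemma x0_cube: "rs \<in> set_pmf x0 \<Longrightarrow> in_unit_cube (fst rs) \<and> in_unit_cube (snd rs)"
  unfolding x0_def using cube c0_bounds by (auto simp: in_unit_cube_def)

lemma x0_rev_nonneg: "revenue v x0 \<ge> 0"
  by (rule revenue_nonneg[OF x0_cube]) (use fG in \<open>auto simp: x0_def\<close>)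

lemma x0_revenue:
  assumes vpos: "\<And>j. v j > 0" and mpos: "mu > 0"
  shows "revenue v x0 = mu"
proof -
  have vc: "v j * c0 j = mu" for j
    using MU[of j] by (simp add: c0_def w_def EG_cmult)
  have win: "winners v c0 = UNIV" by (simp add: winners_def vc)
  have c0pos: "c0 j \<noteq> 0" for j using vc[of j] mpos by auto
  have ne: "UNIV - {i} \<noteq> {}" for i :: 'b
    using other_ex[of i] by auto
  have pr: "price v c0 i = v i" for i
  proof -
    have "(\<lambda>j. v j * c0 j) ` (UNIV - {i}) = {mu}" using ne[of i] by (auto simp: vc)
    then show ?thesis unfolding price_def using c0pos[of i] vc[of i] by (simp add: field_simps)
  qed
  have "revenue v x0 = EG (\<lambda>r. (\<Sum>i\<in>UNIV. (1 / nn) * (r i * v i)))"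
    by (simp add: revenue_def x0_def revenue_at_def win pr nn_def)
  also have "\<dots> = (\<Sum>i\<in>UNIV. (1/nn) * EG (\<lambda>r. w r i))"
    by (simp add: EG_sumS EG_cmult w_def mult.commute)
  also have "\<dots> = mu" using nn_ge2 by (simp add: MU nn_def)
  finally show ?thesis .
qed

end

locale ladder = ctr v G for v :: "'b::finite \<Rightarrow> real" and G +
  fixes K :: nat
  assumes K2: "K \<ge> 2" and vpos: "\<And>j. v j > 0" and Agt: "mu < A"
begin

definition mm :: "nat \<Rightarrow> real" where "mm k = (if 1 \<le> k \<and> k \<le> K then real k else 0)"
definition Z :: real where "Z = real K * (real K + 1) / 2"
definition m :: "nat \<Rightarrow> real" where "m k = mm k / Z"
definition th :: "nat \<Rightarrow> real" where "th k = mm k / (mm k + (nn - 1) * mm (Suc k))"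
definition B :: real where "B = (nn * mu - A) / (nn - 1)"
definition y :: "nat \<Rightarrow> real" where "y k = B + (A - B) * th k"
definition Kd :: "nat pmf" where "Kd = pmf_of_list (map (\<lambda>k. (k, m k)) [1..<K+1])"

lemma Zpos: "Z > 0" using K2 by (simp add: Z_def)

lemma sum_m: "(\<Sum>k\<in>{1..K}. m k) = 1"
proof -
  have "(\<Sum>k\<in>{1..K}. m k) = (\<Sum>k\<in>{1..K}. real k) / Z"
    by (simp add: m_def mm_def sum_divide_distrib)
  moreover have "(\<Sum>k\<in>{1..K}. real k) = Z" unfolding Z_def by (rule sum_nat_real)
  ultimately show ?thesis using Zpos by simp
qed

lemma m_nonneg: "m k \<ge> 0" using Zpos by (simp add: m_def mm_def)

lemma Kd_wf: "pmf_of_list_wf (map (\<lambda>k. (k, m k)) [1..<K+1])"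
proof (rule pmf_of_list_wfI)
  show "x \<in> set (map snd (map (\<lambda>k. (k, m k)) [1..<K + 1])) \<Longrightarrow> 0 \<le> x" for x
    using m_nonneg by auto
  have "sum_list (map snd (map (\<lambda>k. (k, m k)) [1..<K + 1])) = sum_list (map m [1..<K+1])"
    by (simp add: o_def)
  also have "\<dots> = sum m (set [1..<K+1])" by (simp only: sum_set_upt_conv_sum_list_nat)
  also have "\<dots> = (\<Sum>k\<in>{1..K}. m k)" by (rule sum.cong) auto
  finally show "sum_list (map snd (map (\<lambda>k. (k, m k)) [1..<K + 1])) = 1" using sum_m by simp
qed

lemma pmf_Kd: "pmf Kd k = m k"
proof -
  have "pmf Kd k = sum_list (map snd (filter (\<lambda>z. fst z = k) (map (\<lambda>k. (k, m k)) [1..<K+1])))"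
    unfolding Kd_def by (rule pmf_pmf_of_list[OF Kd_wf])
  also have "\<dots> = sum_list (map m (filter (\<lambda>k'. k' = k) [1..<K+1]))"
    by (simp add: filter_map o_def)
  also have "\<dots> = (\<Sum>k'\<in>{1..K} \<inter> {k}. m k')"
    by (subst sum_list_distinct_conv_sum_set) (auto intro!: sum.cong)
  also have "\<dots> = m k" by (cases "1 \<le> k \<and> k \<le> K") (auto simp: m_def mm_def)
  finally show ?thesis .
qed

lemma set_Kd: "set_pmf Kd \<subseteq> {1..K}"
  using set_pmf_of_list[OF Kd_wf] unfolding Kd_def by auto

lemma EKd: "measure_pmf.expectation Kd f = (\<Sum>k\<in>{1..K}. m k * f k)"
  by (subst integral_measure_pmf_real[of "{1..K}"]) (use set_Kd in \<open>auto simp: pmf_Kd mult.commute\<close>)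

definition L :: "(('b \<Rightarrow> real) \<times> nat \<times> 'b) pmf" where
  "L = bind_pmf G (\<lambda>r. bind_pmf Kd (\<lambda>k. map_pmf (\<lambda>i. (r, k, i)) (pmf_of_set (winners v r))))"

lemma win_ne: "winners v r \<noteq> {}" "finite (winners v r)"
  by (simp_all add: winners_am am_ne)

lemma EL: "measure_pmf.expectation L h =
  (\<Sum>r\<in>set_pmf G. pmf G r * (\<Sum>k\<in>{1..K}. m k * ((\<Sum>i\<in>winners v r. h (r, k, i)) / card (winners v r))))"
proof -
  have fKd: "finite (set_pmf Kd)" using set_Kd finite_subset by blast
  have inner: "measure_pmf.expectation (bind_pmf Kd (\<lambda>k. map_pmf (\<lambda>i. (r, k, i)) (pmf_of_set (winners v r)))) h
      = (\<Sum>k\<in>{1..K}. m k * ((\<Sum>i\<in>winners v r. h (r, k, i)) / card (winners v r)))" for r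
  proof -
    have "measure_pmf.expectation (bind_pmf Kd (\<lambda>k. map_pmf (\<lambda>i. (r, k, i)) (pmf_of_set (winners v r)))) h
      = measure_pmf.expectation Kd (\<lambda>k. measure_pmf.expectation (map_pmf (\<lambda>i. (r, k, i)) (pmf_of_set (winners v r))) h)"
      by (rule integral_bind_pmf_fin[OF fKd]) (simp add: win_ne)
    also have "\<dots> = measure_pmf.expectation Kd (\<lambda>k. (\<Sum>i\<in>winners v r. h (r, k, i)) / card (winners v r))"
      by (simp add: integral_pmf_of_set[OF win_ne])
    finally show ?thesis by (simp add: EKd sum_divide_distrib)
  qed
  have "measure_pmf.expectation L h = EG (\<lambda>r. measure_pmf.expectation (bind_pmf Kd (\<lambda>k. map_pmf (\<lambda>i. (r, k, i)) (pmf_of_set (winners v r)))) h)"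
    unfolding L_def by (rule integral_bind_pmf_fin[OF fG]) (use fKd win_ne in auto)
  also have "\<dots> = (\<Sum>r\<in>set_pmf G. pmf G r * (\<Sum>k\<in>{1..K}. m k * ((\<Sum>i\<in>winners v r. h (r, k, i)) / card (winners v r))))"
    by (simp add: EG_sum inner mult.commute)
  finally show ?thesis .
qed

lemma set_L: "set_pmf L = {(r, k, i). r \<in> set_pmf G \<and> k \<in> set_pmf Kd \<and> i \<in> winners v r}"
  unfolding L_def using win_ne by auto


lemma split_sum:
  assumes "finite M" "M \<noteq> {}"
  shows "(\<Sum>i\<in>M. F (i = j)) / card M =
     (if j \<in> M then 1 / card M else 0) * F True + (1 - (if j \<in> M then 1 / card M else 0)) * F False"
proof (cases "j \<in> M")
  case True
  have c: "card M > 0" using assms by (simp add: card_gt_0_iff)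
  have "(\<Sum>i\<in>M. F (i = j)) = F True + (\<Sum>i\<in>M - {j}. F (i = j))"
    using True assms by (simp add: sum.remove)
  also have "(\<Sum>i\<in>M - {j}. F (i = j)) = (\<Sum>i\<in>M - {j}. F False)" by (intro sum.cong) auto
  also have "\<dots> = (real (card M) - 1) * F False" using True assms c by (simp add: card_Diff_singleton of_nat_diff)
  finally show ?thesis using True c by (simp add: field_simps)
next
  case False
  have c: "card M > 0" using assms by (simp add: card_gt_0_iff)
  have e: "\<And>i. i \<in> M \<Longrightarrow> (i = j) = False" using False by auto
  have "(\<Sum>i\<in>M. F (i = j)) = (\<Sum>i\<in>M. F False)" using e by (intro sum.cong) auto
  then show ?thesis using False c by simp
qed

lemma DEC:
  "measure_pmf.expectation L (\<lambda>(r, k, i). g r * F k (i = j)) =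
   (\<Sum>k\<in>{1..K}. m k * (F k True * EG (\<lambda>r. g r * pw (w r) j) + F k False * EG (\<lambda>r. g r * (1 - pw (w r) j))))"
proof -
  have inner: "(\<Sum>i\<in>winners v r. g r * F k (i = j)) / card (winners v r)
      = g r * (pw (w r) j * F k True + (1 - pw (w r) j) * F k False)" for r k
  proof -
    have "(\<Sum>i\<in>winners v r. g r * F k (i = j)) / card (winners v r)
       = g r * ((\<Sum>i\<in>winners v r. F k (i = j)) / card (winners v r))"
      by (simp add: sum_distrib_left)
    also have "(\<Sum>i\<in>winners v r. F k (i = j)) / card (winners v r) = pw (w r) j * F k True + (1 - pw (w r) j) * F k False"
      unfolding pw_def winners_am w_def[symmetric]
      by (rule split_sum[where F="F k"]) (simp_all add: am_ne)
    finally show ?thesis .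
  qed
  have "measure_pmf.expectation L (\<lambda>(r, k, i). g r * F k (i = j)) =
     (\<Sum>r\<in>set_pmf G. pmf G r * (\<Sum>k\<in>{1..K}. m k * (g r * (pw (w r) j * F k True + (1 - pw (w r) j) * F k False))))"
    by (simp add: EL inner)
  also have "\<dots> = (\<Sum>k\<in>{1..K}. \<Sum>r\<in>set_pmf G. m k * (F k True * (g r * pw (w r) j * pmf G r) + F k False * (g r * (1 - pw (w r) j) * pmf G r)))"
    by (subst sum.swap) (simp add: sum_distrib_left algebra_simps)
  also have "\<dots> = (\<Sum>k\<in>{1..K}. m k * (F k True * EG (\<lambda>r. g r * pw (w r) j) + F k False * EG (\<lambda>r. g r * (1 - pw (w r) j))))"
    by (intro sum.cong refl) (simp add: EG_sum sum_distrib_left sum.distrib distrib_left mult.assoc)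
  finally show ?thesis .
qed


lemma nn_gt1: "nn - 1 > 0" using nn_ge2 by simp

lemma mm_pos: "1 \<le> k \<Longrightarrow> k \<le> K \<Longrightarrow> mm k > 0" by (simp add: mm_def)
lemma mm_nonneg: "mm k \<ge> 0" by (simp add: mm_def)

lemma den_pos: "k \<le> K \<Longrightarrow> mm k + (nn - 1) * mm (Suc k) > 0"
proof (cases "k = 0")
  case True
  then show ?thesis using K2 nn_gt1 by (simp add: mm_def)
next
  case False
  assume "k \<le> K"
  then have "mm k > 0" using False by (simp add: mm_pos)
  moreover have "(nn - 1) * mm (Suc k) \<ge> 0" using nn_gt1 mm_nonneg by simp
  ultimately show ?thesis by linarith
qed

lemma th_eq: "k \<le> K \<Longrightarrow> mm k = th k * (mm k + (nn - 1) * mm (Suc k))"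
  using den_pos[of k] unfolding th_def by simp

lemma th0: "th 0 = 0" by (simp add: th_def mm_def)
lemma thK: "th K = 1"
proof -
  have "mm K > 0" using K2 by (simp add: mm_def)
  then show ?thesis by (simp add: th_def mm_def)
qed

lemma th_nonneg: "th k \<ge> 0"
  unfolding th_def using nn_gt1 mm_nonneg by (intro divide_nonneg_nonneg) auto

lemma th_le1: "th k \<le> 1"
proof -
  have "mm k \<le> mm k + (nn - 1) * mm (Suc k)" using nn_gt1 mm_nonneg[of "Suc k"] by simp
  then show ?thesis unfolding th_def using mm_nonneg[of k]
    by (cases "mm k + (nn - 1) * mm (Suc k) = 0") (auto simp: divide_le_eq_1)
qed

lemma th1: "th 1 = 1 / (2 * nn - 1)"
  using K2 unfolding th_def mm_def by (simp add: field_simps)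

lemma th_mono: "k < K \<Longrightarrow> th k < th (Suc k)"
proof -
  assume kK: "k < K"
  consider "k = 0" | "Suc k = K" | "1 \<le> k" "Suc k < K" using kK by linarith
  then show ?thesis
  proof cases
    case 1
    then show ?thesis using K2 nn_gt1 by (simp add: th_def mm_def)
  next
    case 2
    then have k1: "1 \<le> k" using K2 by simp
    have p: "(nn - 1) * mm K > 0" using nn_gt1 mm_pos[of K] K2 by simp
    have "th k < 1" unfolding th_def using mm_pos[OF k1] kK p 2
      by (simp add: divide_less_eq_1)
    then show ?thesis using 2 thK by simp
  next
    case 3
    let ?k = "real k"
    have e1: "th k = ?k / (?k + (nn - 1) * (?k + 1))" using 3 by (simp add: th_def mm_def)
    have e2: "th (Suc k) = (?k + 1) / ((?k + 1) + (nn - 1) * (?k + 2))" using 3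
      by (simp add: th_def mm_def add.commute)
    have kp: "?k \<ge> 1" using 3 by simp
    have d1: "?k + (nn - 1) * (?k + 1) > 0" using kp nn_gt1 by (simp add: add_pos_nonneg)
    have d2: "(?k + 1) + (nn - 1) * (?k + 2) > 0" using kp nn_gt1 by (simp add: add_pos_nonneg)
    have q: "(nn - 1) * (?k * (?k + 2)) < (nn - 1) * ((?k + 1) * (?k + 1))"
      by (rule mult_strict_left_mono) (use nn_gt1 in \<open>simp_all add: algebra_simps\<close>)
    have "?k * ((?k + 1) + (nn - 1) * (?k + 2)) < (?k + 1) * (?k + (nn - 1) * (?k + 1))"
      using q by (simp add: algebra_simps)
    then have "?k / (?k + (nn - 1) * (?k + 1)) < (?k + 1) / ((?k + 1) + (nn - 1) * (?k + 2))"
    proof -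
      let ?D1 = "?k + (nn - 1) * (?k + 1)" and ?D2 = "(?k + 1) + (nn - 1) * (?k + 2)"
      have "?k / ?D1 = (?k * ?D2) / (?D1 * ?D2)" using d1 d2 by simp
      also have "\<dots> < ((?k + 1) * ?D1) / (?D1 * ?D2)"
        by (rule divide_strict_right_mono) (use \<open>?k * ?D2 < (?k + 1) * ?D1\<close> d1 d2 in auto)
      also have "\<dots> = (?k + 1) / ?D2" using d1 d2 by simp
      finally show ?thesis .
    qed
    then show ?thesis using e1 e2 by simp
  qed
qed

lemma A_pos: "A > 0" using Agt mu_ge A_nonneg nn_ge2
  by (smt (verit) divide_nonneg_pos)

lemma B_nonneg: "B \<ge> 0"
  unfolding B_def using mu_ge nn_gt1 nn_ge2 by (simp add: field_simps)

lemma B_lt_A: "B < A"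
proof -
  have "nn * mu < nn * A" using Agt nn_ge2 by simp
  then have "nn * mu - A < (nn - 1) * A" by (simp add: algebra_simps)
  then show ?thesis unfolding B_def using nn_gt1 by (simp add: divide_less_eq mult.commute)
qed

lemma y0: "y 0 = B" by (simp add: y_def th0)
lemma yK: "y K = A" by (simp add: y_def thK)

lemma y_step: "k < K \<Longrightarrow> y k < y (Suc k)"
  unfolding y_def using th_mono[of k] B_lt_A by (simp add: mult_strict_left_mono)

lemma y_mono_strict: "a < b \<Longrightarrow> b \<le> K \<Longrightarrow> y a < y b"
proof (induction b)
  case 0 then show ?case by simp
next
  case (Suc b)
  show ?case
  proof (cases "a = b")
    case True then show ?thesis using y_step Suc.prems by simp
  next
    case False
    then have "y a < y b" using Suc by simp
    also have "y b < y (Suc b)" using y_step Suc.prems by simp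
    finally show ?thesis .
  qed
qed

lemma y_inj: "a \<le> K \<Longrightarrow> b \<le> K \<Longrightarrow> y a = y b \<Longrightarrow> a = b"
  using y_mono_strict[of a b] y_mono_strict[of b a] by (metis less_irrefl linorder_neqE_nat)

lemma y_ge_B: "y k \<ge> B" unfolding y_def using th_nonneg B_lt_A by simp
lemma y_le_A: "y k \<le> A"
proof -
  have "(A - B) * th k \<le> (A - B) * 1" using th_le1 B_lt_A by (intro mult_left_mono) auto
  then show ?thesis unfolding y_def by simp
qed
lemma y_pos: "1 \<le> k \<Longrightarrow> k \<le> K \<Longrightarrow> y k > 0"
  using y_mono_strict[of 0 k] y0 B_nonneg by simp


definition sig :: "nat \<Rightarrow> 'b \<Rightarrow> 'b \<Rightarrow> real" where
  "sig k i = (\<lambda>j. (if j = i then y k else y (k - 1)) / v j)"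
definition xl :: "(('b \<Rightarrow> real) \<times> ('b \<Rightarrow> real)) pmf" where
  "xl = map_pmf (\<lambda>(r, k, i). (r, sig k i)) L"

lemma fin_L: "finite (set_pmf L)"
proof -
  have "set_pmf L \<subseteq> set_pmf G \<times> {1..K} \<times> UNIV" using set_L set_Kd by auto
  moreover have "finite (set_pmf G \<times> {1..K} \<times> (UNIV :: 'b set))" using fG by simp
  ultimately show ?thesis by (rule finite_subset)
qed

lemma m0: "m 0 = 0" by (simp add: m_def mm_def)
lemma mbig: "k > K \<Longrightarrow> m k = 0" by (simp add: m_def mm_def)

lemma xl_info: "info_structure G xl"
  unfolding info_structure_def
proof (intro conjI ballI)
  show "finite (set_pmf xl)" unfolding xl_def using fin_L by simp
  have "map_pmf fst xl = map_pmf (\<lambda>(r, k, i). r) L"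
    unfolding xl_def by (simp add: pmf.map_comp o_def case_prod_unfold)
  also have "\<dots> = G"
    unfolding L_def by (simp add: map_bind_pmf pmf.map_comp o_def map_pmf_const bind_return_pmf' bind_pmf_const)
  finally show "map_pmf fst xl = G" .
  fix rs assume "rs \<in> set_pmf xl"
  then obtain r k i where l: "(r, k, i) \<in> set_pmf L" and rs: "rs = (r, sig k i)"
    unfolding xl_def by auto
  have k: "k \<in> set_pmf Kd" using l set_L by auto
  have kK: "k \<le> K" using k set_Kd by auto
  have b: "0 \<le> y k' / v j \<and> y k' / v j \<le> 1" for k' j
  proof -
    have "0 \<le> y k'" using y_ge_B[of k'] B_nonneg by simp
    moreover have "y k' \<le> v j" using y_le_A[of k'] A_le_v[of j] by simp
    ultimately show ?thesis using vpos[of j] by (simp add: divide_le_eq_1)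
  qed
  show "in_unit_cube (snd rs)" unfolding rs in_unit_cube_def sig_def using b by simp
qed

lemma sum_ind1:
  assumes "k0 \<le> K"
  shows "(\<Sum>k\<in>{1..K}. m k * (if y k = y k0 then 1 else 0)) = m k0"
proof -
  have "(\<Sum>k\<in>{1..K}. m k * (if y k = y k0 then 1 else 0)) = (\<Sum>k\<in>{1..K}. if k = k0 then m k else 0)"
    by (intro sum.cong refl) (use y_inj assms in auto)
  also have "\<dots> = (if k0 \<in> {1..K} then m k0 else 0)" by (rule sum.delta) simp
  also have "\<dots> = m k0" using m0 assms by (cases "k0 = 0") auto
  finally show ?thesis .
qed

lemma sum_ind2:
  assumes "k0 \<le> K"
  shows "(\<Sum>k\<in>{1..K}. m k * (if y (k - 1) = y k0 then 1 else 0)) = m (Suc k0)"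
proof -
  have "(\<Sum>k\<in>{1..K}. m k * (if y (k - 1) = y k0 then 1 else 0)) = (\<Sum>k\<in>{1..K}. if k = Suc k0 then m k else 0)"
  proof (intro sum.cong refl)
    fix k assume "k \<in> {1..K}"
    then have "y (k - 1) = y k0 \<longleftrightarrow> k = Suc k0" using y_inj[of "k - 1" k0] assms by auto
    then show "m k * (if y (k - 1) = y k0 then 1 else 0) = (if k = Suc k0 then m k else 0)" by simp
  qed
  also have "\<dots> = m (Suc k0)" using mbig[of "Suc k0"] by (simp add: sum.delta)
  finally show ?thesis .
qed

lemma xl_calibrated: "calibrated xl"
proof (rule calibrated_crit)
  show "finite (set_pmf xl)" unfolding xl_def using fin_L by simp
  fix j t
  define F where "F = (\<lambda>k b. if y (if b then k else k - 1) = t * v j then (1::real) else 0)"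
  have ind: "indicator {rs. snd rs j = t} (r, sig k i) = F k (i = j)" for r k i
    using vpos[of j] by (auto simp: F_def sig_def indicator_def field_simps)
  have L1: "measure_pmf.expectation xl (\<lambda>rs. indicator {rs. snd rs j = t} rs * fst rs j)
      = measure_pmf.expectation L (\<lambda>(r, k, i). r j * F k (i = j))"
    unfolding xl_def by (simp add: case_prod_unfold ind mult.commute)
  have L2: "measure_pmf.expectation xl (indicator {rs. snd rs j = t} :: _ \<Rightarrow> real)
      = measure_pmf.expectation L (\<lambda>(r, k, i). 1 * F k (i = j))"
  proof -
    have "measure_pmf.expectation xl (indicator {rs. snd rs j = t} :: _ \<Rightarrow> real)
       = measure_pmf.expectation L (\<lambda>l. indicator {rs. snd rs j = t} ((\<lambda>(r, k, i). (r, sig k i)) l))"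
      unfolding xl_def by (subst integral_map_pmf) (rule refl)
    also have "\<dots> = measure_pmf.expectation L (\<lambda>(r, k, i). 1 * F k (i = j))"
      by (intro arg_cong[where f="measure_pmf.expectation L"] ext) (auto simp: ind)
    finally show ?thesis .
  qed
  define Rw where "Rw = EG (\<lambda>r. r j * pw (w r) j)"
  define Rl where "Rl = EG (\<lambda>r. r j * (1 - pw (w r) j))"
  define Pw where "Pw = EG (\<lambda>r. 1 * pw (w r) j)"
  define Pl where "Pl = EG (\<lambda>r. 1 * (1 - pw (w r) j))"
  have vRw: "v j * Rw = A / nn"
  proof -
    have "v j * Rw = EG (\<lambda>r. v j * (r j * pw (w r) j))" unfolding Rw_def by (rule EG_cmult[symmetric])
    also have "\<dots> = EG (\<lambda>r. w r j * pw (w r) j)" by (simp add: w_def mult.assoc)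
    also have "\<dots> = A / nn" by (rule WPW)
    finally show ?thesis .
  qed
  have vRl: "v j * Rl = mu - A / nn"
  proof -
    have "v j * Rl = EG (\<lambda>r. v j * (r j * (1 - pw (w r) j)))" unfolding Rl_def by (rule EG_cmult[symmetric])
    also have "\<dots> = EG (\<lambda>r. w r j * (1 - pw (w r) j))" by (simp add: w_def mult.assoc)
    also have "\<dots> = mu - A / nn" by (rule mu_minus[symmetric])
    finally show ?thesis .
  qed
  have ePw: "Pw = 1 / nn" using PW[of j] unfolding Pw_def by simp
  have ePl: "Pl = 1 - 1 / nn" using PW[of j] unfolding Pl_def by (simp add: EG_diff)
  have gen: "(\<Sum>k\<in>{1..K}. m k * (F k True * X + F k False * Y))
      = (\<Sum>k\<in>{1..K}. m k * F k True) * X + (\<Sum>k\<in>{1..K}. m k * F k False) * Y" for X Y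
    by (simp add: sum_distrib_right sum_distrib_left sum.distrib algebra_simps)
  have LHS: "measure_pmf.expectation xl (\<lambda>rs. indicator {rs. snd rs j = t} rs * fst rs j)
     = (\<Sum>k\<in>{1..K}. m k * F k True) * Rw + (\<Sum>k\<in>{1..K}. m k * F k False) * Rl"
    unfolding L1 Rw_def Rl_def gen[symmetric] by (rule DEC[of "\<lambda>r. r j" F j])
  have RHS: "measure_pmf.expectation xl (indicator {rs. snd rs j = t} :: _ \<Rightarrow> real)
     = (\<Sum>k\<in>{1..K}. m k * F k True) * Pw + (\<Sum>k\<in>{1..K}. m k * F k False) * Pl"
    unfolding L2 Pw_def Pl_def gen[symmetric] by (rule DEC[of "\<lambda>r. 1" F j])
  show "measure_pmf.expectation xl (\<lambda>rs. indicator {rs. snd rs j = t} rs * fst rs j)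
     = t * measure_pmf.expectation xl (indicator {rs. snd rs j = t} :: _ \<Rightarrow> real)"
  proof (cases "\<exists>k0. k0 \<le> K \<and> y k0 = t * v j")
    case True
    then obtain k0 where k0: "k0 \<le> K" "y k0 = t * v j" by blast
    have s1: "(\<Sum>k\<in>{1..K}. m k * F k True) = m k0"
      unfolding F_def using sum_ind1[OF k0(1)] k0(2) by simp
    have s2: "(\<Sum>k\<in>{1..K}. m k * F k False) = m (Suc k0)"
      unfolding F_def using sum_ind2[OF k0(1)] k0(2) by simp
    have key: "m k0 * A + m (Suc k0) * (nn * mu - A) = y k0 * (m k0 + (nn - 1) * m (Suc k0))"
    proof -
      have e: "mm k0 = th k0 * (mm k0 + (nn - 1) * mm (Suc k0))" by (rule th_eq[OF k0(1)])
      have nB: "nn * mu - A = (nn - 1) * B" unfolding B_def using nn_gt1 by simp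
      have "m k0 * A + m (Suc k0) * (nn * mu - A) - y k0 * (m k0 + (nn - 1) * m (Suc k0))
          = (A - B) * (mm k0 - th k0 * (mm k0 + (nn - 1) * mm (Suc k0))) / Z"
        unfolding nB y_def m_def using Zpos by (simp add: field_simps)
      also have "\<dots> = 0" using e by simp
      finally show ?thesis by simp
    qed
    have "v j * (m k0 * Rw + m (Suc k0) * Rl) = m k0 * (v j * Rw) + m (Suc k0) * (v j * Rl)"
      by (simp add: algebra_simps)
    also have "\<dots> = m k0 * (A / nn) + m (Suc k0) * (mu - A / nn)" by (simp only: vRw vRl)
    also have "\<dots> = (m k0 * A + m (Suc k0) * (nn * mu - A)) / nn"
      using nn_ge2 by (simp add: field_simps)
    also have "\<dots> = y k0 * (m k0 + (nn - 1) * m (Suc k0)) / nn" using key by simp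
    also have "\<dots> = v j * (t * (m k0 * Pw + m (Suc k0) * Pl))"
      unfolding ePw ePl using k0(2) nn_ge2 by (simp add: field_simps)
    finally have "m k0 * Rw + m (Suc k0) * Rl = t * (m k0 * Pw + m (Suc k0) * Pl)"
      using vpos[of j] by simp
    then show ?thesis unfolding LHS RHS s1 s2 by (simp add: mult.commute)
  next
    case False
    have s1: "(\<Sum>k\<in>{1..K}. m k * F k b) = 0" for b
      unfolding F_def using False by (intro sum.neutral) auto
    show ?thesis unfolding LHS RHS s1 by simp
  qed
qed


lemma rev_at:
  assumes k: "1 \<le> k" "k \<le> K" and i: "i \<in> winners v r"
  shows "revenue_at v r (sig k i) = Max (range (w r)) * (y (k - 1) / y k)"
proof -
  have vs: "v l * sig k i l = (if l = i then y k else y (k - 1))" for l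
    using vpos[of l] by (simp add: sig_def)
  have lt: "y (k - 1) < y k" using y_mono_strict[of "k - 1" k] k by simp
  have ykp: "y k > 0" using y_pos k by simp
  have win: "winners v (sig k i) = {i}"
    unfolding winners_def vs using lt by auto
  have img: "(\<lambda>l. v l * sig k i l) ` (UNIV - {i}) = {y (k - 1)}"
    unfolding vs using other_ex[of i] by auto
  have si: "sig k i i = y k / v i" by (simp add: sig_def)
  have pr: "price v (sig k i) i = v i * (y (k - 1) / y k)"
    unfolding price_def img si using ykp vpos[of i] by (simp add: field_simps)
  have wi: "w r i = Max (range (w r))" using i unfolding winners_am w_def[symmetric] by (simp add: am_Max)
  have "r i * price v (sig k i) i = (v i * r i) * (y (k - 1) / y k)" unfolding pr by (simp add: algebra_simps)
  also have "v i * r i = Max (range (w r))" using wi by (simp add: w_def)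
  finally show ?thesis unfolding revenue_at_def win by simp
qed

lemma xl_revenue: "revenue v xl = A * (\<Sum>k\<in>{1..K}. m k * (y (k - 1) / y k))"
proof -
  have "revenue v xl = measure_pmf.expectation L (\<lambda>(r, k, i). revenue_at v r (sig k i))"
    unfolding revenue_def xl_def by (simp add: case_prod_unfold)
  also have "\<dots> = (\<Sum>r\<in>set_pmf G. pmf G r * (\<Sum>k\<in>{1..K}. m k *
       ((\<Sum>i\<in>winners v r. Max (range (w r)) * (y (k - 1) / y k)) / card (winners v r))))"
    unfolding EL by (intro sum.cong refl arg_cong2[where f="(*)"] arg_cong2[where f="(/)"]) (auto simp: rev_at)
  also have "\<dots> = (\<Sum>r\<in>set_pmf G. pmf G r * (Max (range (w r)) * (\<Sum>k\<in>{1..K}. m k * (y (k - 1) / y k))))"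
    using win_ne by (simp add: sum_distrib_left mult.assoc mult.left_commute)
  also have "\<dots> = A * (\<Sum>k\<in>{1..K}. m k * (y (k - 1) / y k))"
    unfolding A_def EG_sum sum_distrib_right by (intro sum.cong refl) (simp add: algebra_simps)
  finally show ?thesis .
qed

lemma loss_bound: "1 - (\<Sum>k\<in>{1..K}. m k * (y (k - 1) / y k)) \<le> 4 * nn / K"
proof -
  have Kp: "real K \<ge> 2" using K2 by simp
  have y1p: "y 1 > 0" using y_pos K2 by simp
  have mk: "m k \<le> 2 / K" for k
  proof -
    have "mm k \<le> K" by (simp add: mm_def)
    then have "m k \<le> K / Z" unfolding m_def using Zpos by (simp add: divide_right_mono)
    also have "K / Z = 2 / (K + 1)"
    proof -
      have "real K + 1 \<noteq> 0" "real K \<noteq> 0" using Kp by auto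
      have "K / Z = (real K * 2) / (real K * (real K + 1))" unfolding Z_def by simp
      also have "\<dots> = 2 / (real K + 1)" using \<open>real K \<noteq> 0\<close> by (rule mult_divide_mult_cancel_left)
      finally show ?thesis by simp
    qed
    also have "\<dots> \<le> 2 / K" using Kp by (simp add: frac_le)
    finally show ?thesis .
  qed
  have m1: "m 1 \<le> 2 / K"
    by (rule mk)
  have y1: "A \<le> (2 * nn - 1) * y 1"
  proof -
    have "y 1 = B * (1 - th 1) + A * th 1" unfolding y_def by (simp add: algebra_simps)
    moreover have "B * (1 - th 1) \<ge> 0" using B_nonneg th_le1[of 1] by simp
    ultimately have "y 1 \<ge> A * th 1" by simp
    then have "(2 * nn - 1) * y 1 \<ge> (2 * nn - 1) * (A * th 1)" using nn_ge2 by (intro mult_left_mono) auto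
    also have "(2 * nn - 1) * (A * th 1) = A" unfolding th1 using nn_ge2 by simp
    finally show ?thesis .
  qed
  have "1 - (\<Sum>k\<in>{1..K}. m k * (y (k - 1) / y k)) = (\<Sum>k\<in>{1..K}. m k * (1 - y (k - 1) / y k))"
    using sum_m by (simp add: sum_subtractf right_diff_distrib)
  also have "\<dots> = m 1 * (1 - y 0 / y 1) + (\<Sum>k\<in>{2..K}. m k * (1 - y (k - 1) / y k))"
  proof -
    have "{1..K} = insert 1 {2..K}" using K2 by auto
    then show ?thesis by simp
  qed
  also have "\<dots> \<le> 2 / K + (\<Sum>k\<in>{2..K}. (2 / K) * ((y k - y (k - 1)) / y 1))"
  proof (rule add_mono)
    have "y 0 / y 1 \<ge> 0" using y0 B_nonneg y1p by simp
    then have "m 1 * (1 - y 0 / y 1) \<le> m 1 * 1" using m_nonneg[of 1] by (intro mult_left_mono) auto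
    then show "m 1 * (1 - y 0 / y 1) \<le> 2 / K" using m1 by simp
    show "(\<Sum>k\<in>{2..K}. m k * (1 - y (k - 1) / y k)) \<le> (\<Sum>k\<in>{2..K}. (2 / K) * ((y k - y (k - 1)) / y 1))"
    proof (rule sum_mono)
      fix k assume kk: "k \<in> {2..K}"
      have ykp: "y k > 0" using y_pos kk by simp
      have d: "y k - y (k - 1) \<ge> 0" using y_mono_strict[of "k - 1" k] kk by simp
      have y1k: "y 1 \<le> y k" using y_mono_strict[of 1 k] kk by (cases "k = 1") auto
      have "1 - y (k - 1) / y k = (y k - y (k - 1)) / y k" using ykp by (simp add: field_simps)
      also have "\<dots> \<le> (y k - y (k - 1)) / y 1" using d y1p y1k by (intro divide_left_mono) auto
      finally have e: "1 - y (k - 1) / y k \<le> (y k - y (k - 1)) / y 1" .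
      have "m k * (1 - y (k - 1) / y k) \<le> m k * ((y k - y (k - 1)) / y 1)"
        using e m_nonneg[of k] by (intro mult_left_mono) auto
      also have "\<dots> \<le> (2 / K) * ((y k - y (k - 1)) / y 1)"
        using mk[of k] d y1p by (intro mult_right_mono) auto
      finally show "m k * (1 - y (k - 1) / y k) \<le> (2 / K) * ((y k - y (k - 1)) / y 1)" .
    qed
  qed
  also have "(\<Sum>k\<in>{2..K}. (2 / K) * ((y k - y (k - 1)) / y 1)) = (2 / K) * ((y K - y 1) / y 1)"
  proof -
    have T: "(\<Sum>k\<in>{2..K}. y k - y (k - 1)) = y K - y 1" by (rule telesc) (use K2 in simp)
    have "(\<Sum>k\<in>{2..K}. (2 / K) * ((y k - y (k - 1)) / y 1)) = (2 / K) * ((\<Sum>k\<in>{2..K}. y k - y (k - 1)) / y 1)"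
      by (simp only: sum_distrib_left sum_divide_distrib)
    then show ?thesis unfolding T .
  qed
  also have "(y K - y 1) / y 1 \<le> 2 * nn - 1"
  proof -
    have "y K - y 1 \<le> A" using yK y1p by simp
    also have "\<dots> \<le> (2 * nn - 1) * y 1" by (rule y1)
    finally show ?thesis using y1p by (simp add: divide_le_eq)
  qed
  then have "2 / K + (2 / K) * ((y K - y 1) / y 1) \<le> 2 / K + (2 / K) * (2 * nn - 1)"
    using Kp by (intro add_left_mono mult_left_mono) auto
  also have "\<dots> = 4 * nn / K" using Kp by (simp add: field_simps)
  finally show ?thesis by simp
qed

end


theorem mainTheorem3:
  fixes v :: "'b::finite \<Rightarrow> real" and G :: "('b \<Rightarrow> real) pmf" and \<epsilon> :: real
  assumes "CARD('b) \<ge> 2"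
    and "\<forall>i. v i \<ge> 0"
    and "finite (set_pmf G)"
    and "\<forall>r\<in>set_pmf G. in_unit_cube r"
    and "exchangeable_env v G"
    and "\<epsilon> > 0"
  shows "\<exists>x. info_structure G x \<and> calibrated x \<and> revenue v x \<ge> surplus v G - \<epsilon>"
proof -
  interpret ctr v G using assms by unfold_locales auto
  have eps: "\<epsilon> > 0" by fact
  show ?thesis
  proof (cases "\<exists>j. v j = 0")
    case True
    then obtain j where "v j = 0" by blast
    then have "A \<le> 0" by (rule A_zero_case)
    then have "revenue v x0 \<ge> surplus v G - \<epsilon>" using x0_rev_nonneg eps surplus_A by simp
    then show ?thesis using x0_info x0_calibrated by blast
  next
    case False
    then have vpos: "\<And>j. v j > 0" using vnn by (metis less_eq_real_def)
    show ?thesis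
    proof (cases "A \<le> mu")
      case True
      have "revenue v x0 \<ge> A"
      proof (cases "mu > 0")
        case True
        then show ?thesis using x0_revenue[OF vpos True] \<open>A \<le> mu\<close> by simp
      next
        case False
        then show ?thesis using \<open>A \<le> mu\<close> x0_rev_nonneg by simp
      qed
      then have "revenue v x0 \<ge> surplus v G - \<epsilon>" using eps surplus_A by simp
      then show ?thesis using x0_info x0_calibrated by blast
    next
      case False
      define K where "K = nat \<lceil>4 * nn * A / \<epsilon>\<rceil> + 2"
      interpret ladder v G K
        by unfold_locales (use False vpos in \<open>auto simp: K_def\<close>)
      have Kp: "real K > 0" using K2 by simp
      have Kge: "4 * nn * A / \<epsilon> \<le> real K"
      proof -
        have "4 * nn * A / \<epsilon> \<le> real (nat \<lceil>4 * nn * A / \<epsilon>\<rceil>)" by linarith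
        then show ?thesis unfolding K_def by simp
      qed
      then have "4 * nn * A \<le> \<epsilon> * real K" using eps by (simp add: divide_le_eq mult.commute)
      then have b1: "A * (4 * nn / K) \<le> \<epsilon>" using Kp by (simp add: divide_le_eq mult.commute mult.left_commute)
      have "A * (1 - 4 * nn / K) \<le> A * (\<Sum>k\<in>{1..K}. m k * (y (k - 1) / y k))"
        using loss_bound A_pos by (intro mult_left_mono) auto
      then have "revenue v xl \<ge> A - \<epsilon>" unfolding xl_revenue using b1 by (simp add: right_diff_distrib)
      then show ?thesis using xl_info xl_calibrated surplus_A by auto
    qed
  qed
qed

end
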